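(* Let $d\ge 1$ and $m\in\big(\frac d{d+2},1\big)$. Let $u\ge 0$ be a function in $\mathrm{L}^1(\mathbb R^d)$ such that $u^m$ and $x\mapsto|x|^2u$ are integrable on $\mathbb R^d$, let $M:=\|u\|_1$, and let $\sigma>0$ be such that $\int_{\mathbb R^d}|x|^2u\,dx=\int_{\mathbb R^d}|x|^2B_\sigma\,dx$. Then \[ \frac{\mathcal F_\sigma[u]}{\sigma^{\frac d2(1-m)}}\ge\frac{m}{8\int_{\mathbb R^d}B_1^m\,dx}\left(C_M\,\|u-B_\sigma\|_1+\frac1\sigma\int_{\mathbb R^d}|x|^2\,|u-B_\sigma|\,dx\right)^2 . \]
   Context: Let $m_c:=\frac{d-2}d$. Let $M_*:=\int_{\mathbb R^d}(1+|x|^2)^{\frac1{m-1}}dx=\pi^{d/2}\Gamma\big(\frac{d(m-m_c)}{2(1-m)}\big)/\Gamma\big(\frac1{1-m}\big)$ and $C_M:=(M_*/M)^{\frac{2(1-m)}{d(m-m_c)}}$, so that the Barenblatt function $B_\sigma(x):=\sigma^{-\frac d2}\big(C_M+\frac1\sigma|x|^2\big)^{\frac1{m-1}}$ satisfies $\|B_\sigma\|_1=M$ for every $\sigma>0$. The relative entropy is \[ \mathcal F_\sigma[u]:=\frac1{m-1}\int_{\mathbb R^d}\Big[u^m-B_\sigma^m-m\,B_\sigma^{m-1}(u-B_\sigma)\Big]dx . \] *)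

theory Defs
  imports "HOL-Analysis.Analysis"
begin

text \<open>Dimension d is DIM('a) for the ambient Euclidean space 'a.\<close>

definition m_crit :: "'a::euclidean_space itself \<Rightarrow> real" where
  "m_crit T = (real DIM('a) - 2) / real DIM('a)"

definition Mstar :: "'a::euclidean_space itself \<Rightarrow> real \<Rightarrow> real" where
  "Mstar T m = (\<integral>x. (1 + (norm (x::'a))\<^sup>2) powr (1 / (m - 1)) \<partial>lborel)"

definition CM :: "'a::euclidean_space itself \<Rightarrow> real \<Rightarrow> real \<Rightarrow> real" where
  "CM T m M = (Mstar T m / M) powr (2 * (1 - m) / (real DIM('a) * (m - m_crit T)))"

definition barenblatt :: "real \<Rightarrow> real \<Rightarrow> real \<Rightarrow> 'a::euclidean_space \<Rightarrow> real" where
  "barenblatt m M \<sigma> x =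
     \<sigma> powr (- real DIM('a) / 2) * (CM TYPE('a) m M + (norm x)\<^sup>2 / \<sigma>) powr (1 / (m - 1))"

definition rel_entropy :: "real \<Rightarrow> real \<Rightarrow> real \<Rightarrow> ('a::euclidean_space \<Rightarrow> real) \<Rightarrow> real" where
  "rel_entropy m M \<sigma> u = 1 / (m - 1) *
     (\<integral>x. (u x powr m - barenblatt m M \<sigma> x powr m
            - m * barenblatt m M \<sigma> x powr (m - 1) * (u x - barenblatt m M \<sigma> x)) \<partial>lborel)"

end

theory Submission
  imports Defs
begin


lemma nn_integral_scale_euc:
  fixes f :: "'a::euclidean_space \<Rightarrow> ennreal"
  assumes [measurable]: "f \<in> borel_measurable borel" and c: "c \<noteq> 0"
  shows "(\<integral>\<^sup>+x. f x \<partial>lborel) = ennreal (\<bar>c\<bar>^DIM('a)) * (\<integral>\<^sup>+x. f (c *\<^sub>R x) \<partial>lborel)"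
  by (subst lborel_affine[OF c, of 0])
     (simp add: nn_integral_density nn_integral_distr nn_integral_cmult)

lemma integrable_scale_euc:
  fixes f :: "'a::euclidean_space \<Rightarrow> real"
  assumes f: "integrable lborel f" and c: "c \<noteq> 0"
  shows "integrable lborel (\<lambda>x. f (c *\<^sub>R x))"
proof -
  have [measurable]: "f \<in> borel_measurable borel" using f by auto
  show ?thesis
  using f unfolding integrable_iff_bounded
  apply (subst (asm) nn_integral_scale_euc[where c=c])
  using c by (auto simp: ennreal_mult_less_top)
qed

lemma integrable_scale_euc_iff:
  fixes f :: "'a::euclidean_space \<Rightarrow> real"
  assumes c: "c \<noteq> 0"
  shows "integrable lborel (\<lambda>x. f (c *\<^sub>R x)) \<longleftrightarrow> integrable lborel f"
  using integrable_scale_euc[of f c] integrable_scale_euc[of "\<lambda>x. f (c *\<^sub>R x)" "1/c"] c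
  by auto

lemma integral_scale_euc:
  fixes f :: "'a::euclidean_space \<Rightarrow> real"
  assumes c: "c \<noteq> 0"
  shows "(\<integral>x. f x \<partial>lborel) = \<bar>c\<bar>^DIM('a) * (\<integral>x. f (c *\<^sub>R x) \<partial>lborel)"
proof cases
  assume f: "integrable lborel f"
  then have [measurable]: "f \<in> borel_measurable borel" by auto
  show ?thesis
    using c f integrable_scale_euc[OF f c]
    by (subst lborel_affine[OF c, of 0]) (simp add: integral_density integral_distr)
next
  assume "\<not> integrable lborel f" with c show ?thesis
    by (simp add: integrable_scale_euc_iff not_integrable_integral_eq)
qed



lemma powr_negexp_le1: "1 \<le> (s::real) \<Longrightarrow> e \<le> 0 \<Longrightarrow> s powr e \<le> 1"
  using powr_mono[of e 0 s] by simp
lemma powr_negexp_ge1: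
  assumes "0 < (s::real)" "s \<le> 1" "e \<le> 0" shows "s powr e \<ge> 1"
proof -
  have a: "s powr (-e) \<le> 1" using assms by (intro powr_le1) auto
  have b: "s powr (-e) > 0" using assms by simp
  have "s powr e = 1 / s powr (-e)" using assms by (simp add: powr_minus_divide)
  then show ?thesis using a b by simp
qed

lemma tangent_T1:
  fixes m t :: real assumes m: "0 < m" "m < 1" and t: "t > 0"
  shows "t powr m \<le> 1 + m * (t - 1)"
proof -
  define h where "h s = 1 + m * (s - 1) - s powr m" for s :: real
  have d: "(h has_real_derivative (m - m * s powr (m - 1))) (at s)" if "s > 0" for s
    unfolding h_def using that
    by (auto intro!: derivative_eq_intros)
  have h1: "h 1 = 0" by (simp add: h_def)
  show ?thesis
  proof (cases "t \<ge> 1")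
    case True
    have "h 1 \<le> h t"
    proof (rule deriv_nonneg_imp_mono[of 1 t h "\<lambda>s. m - m * s powr (m - 1)"])
      fix s assume s: "s \<in> {1..t}"
      then show "(h has_real_derivative (m - m * s powr (m - 1))) (at s)" using d by auto
      have "s powr (m - 1) \<le> 1" using s m by (intro powr_negexp_le1) auto
      then have "m * s powr (m - 1) \<le> m * 1" using m by (intro mult_left_mono) auto
      then show "m - m * s powr (m - 1) \<ge> 0" by simp
    qed (use True in auto)
    then show ?thesis using h1 by (simp add: h_def)
  next
    case False
    have "h 1 \<le> h t"
    proof (rule deriv_nonpos_imp_antimono[of t 1 h "\<lambda>s. m - m * s powr (m - 1)"])
      fix s assume s: "s \<in> {t..1}"
      then show "(h has_real_derivative (m - m * s powr (m - 1))) (at s)" using d t by auto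
      have "s powr (m - 1) \<ge> 1" using s m t by (intro powr_negexp_ge1) auto
      then have "m * 1 \<le> m * s powr (m - 1)" using m by (intro mult_left_mono) auto
      then show "m - m * s powr (m - 1) \<le> 0" by simp
    qed (use False in auto)
    then show ?thesis using h1 by (simp add: h_def)
  qed
qed

lemma tangent_T2:
  fixes m t :: real assumes m: "0 < m" "m < 1" and t: "0 < t" "t \<le> 1"
  shows "t powr (m - 1) \<ge> 1 + (1 - m) * (1 - t)"
proof -
  define h where "h s = s powr (m - 1) - 1 - (1 - m) * (1 - s)" for s :: real
  have d: "(h has_real_derivative ((m - 1) * s powr (m - 1 - 1) + (1 - m))) (at s)" if "s > 0" for s
    unfolding h_def using that
    by (auto intro!: derivative_eq_intros)
  have h1: "h 1 = 0" by (simp add: h_def)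
  have "h 1 \<le> h t"
  proof (rule deriv_nonpos_imp_antimono[of t 1 h "\<lambda>s. (m - 1) * s powr (m - 1 - 1) + (1 - m)"])
    fix s assume s: "s \<in> {t..1}"
    then show "(h has_real_derivative ((m - 1) * s powr (m - 1 - 1) + (1 - m))) (at s)" using d t by auto
    have "s powr (m - 1 - 1) \<ge> 1" using s m t by (intro powr_negexp_ge1) auto
    then have "(1 - m) * 1 \<le> (1 - m) * s powr (m - 1 - 1)" using m by (intro mult_left_mono) auto
    then show "(m - 1) * s powr (m - 1 - 1) + (1 - m) \<le> 0" by (simp add: algebra_simps)
  qed (use t in auto)
  then show ?thesis using h1 by (simp add: h_def)
qed

lemma tangent_T3:
  fixes m t :: real assumes m: "0 < m" "m < 1" and t: "0 \<le> t" "t \<le> 1"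
  shows "1 + m * (t - 1) - t powr m \<ge> m * (1 - m) / 2 * (1 - t)\<^sup>2"
proof (cases "t = 0")
  case True
  have "m / 2 * (1 - m) \<le> 1 * (1 - m)" using m by (intro mult_right_mono) auto
  then show ?thesis using True m by simp
next
  case False
  then have t0: "t > 0" using t by auto
  define h where "h s = 1 + m * (s - 1) - s powr m - m * (1 - m) / 2 * (1 - s)\<^sup>2" for s :: real
  have d: "(h has_real_derivative (m - m * s powr (m - 1) + m * (1 - m) * (1 - s))) (at s)" if "s > 0" for s
    unfolding h_def using that
    by (auto intro!: derivative_eq_intros simp: power2_eq_square field_simps)
  have h1: "h 1 = 0" by (simp add: h_def)
  have "h 1 \<le> h t"
  proof (rule deriv_nonpos_imp_antimono[of t 1 h "\<lambda>s. m - m * s powr (m - 1) + m * (1 - m) * (1 - s)"])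
    fix s assume s: "s \<in> {t..1}"
    then show "(h has_real_derivative (m - m * s powr (m - 1) + m * (1 - m) * (1 - s))) (at s)" using d t0 by auto
    have "s powr (m - 1) \<ge> 1 + (1 - m) * (1 - s)" using s m t0 by (intro tangent_T2) auto
    then have "m * (1 + (1 - m) * (1 - s)) \<le> m * s powr (m - 1)" using m by (intro mult_left_mono) auto
    then show "m - m * s powr (m - 1) + m * (1 - m) * (1 - s) \<le> 0" by (simp add: algebra_simps)
  qed (use t in auto)
  then show ?thesis using h1 by (simp add: h_def)
qed

definition rr :: "real \<Rightarrow> real \<Rightarrow> real \<Rightarrow> real" where
  "rr m u b = u powr m - b powr m - m * b powr (m - 1) * (u - b)"

lemma rr_nonpos:
  fixes m u b :: real assumes m: "0 < m" "m < 1" and u: "u \<ge> 0" and b: "b > 0"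
  shows "rr m u b \<le> 0"
proof -
  define t where "t = u / b"
  have ut: "u = b * t" using b by (simp add: t_def)
  have t0: "t \<ge> 0" using u b by (simp add: t_def)
  have bm1: "b powr (m - 1) * b = b powr m" using b by (simp add: powr_diff)
  have um: "u powr m = b powr m * t powr m" using b t0 by (simp add: ut powr_mult)
  have eq0: "rr m u b = b powr m * t powr m - b powr m - m * (b powr (m - 1) * b) * (t - 1)"
    unfolding rr_def um by (simp add: ut algebra_simps)
  have eq: "rr m u b = b powr m * (t powr m - 1 - m * (t - 1))"
    unfolding eq0 bm1 by (simp add: algebra_simps)
  have "t powr m - 1 - m * (t - 1) \<le> 0"
  proof (cases "t = 0")
    case True then show ?thesis using m by simp
  next
    case False then show ?thesis using tangent_T1[OF m, of t] t0 by simp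
  qed
  then show ?thesis unfolding eq by (simp add: mult_nonneg_nonpos)
qed

lemma key_pt:
  fixes m u b e :: real assumes m: "0 < m" "m < 1" and u: "u \<ge> 0" and b: "b > 0" and e: "e > 0"
  shows "b powr (m - 1) * max (b - u) 0 \<le> e / 2 * b powr m + 1 / (e * m) * (1 / (m - 1) * rr m u b)"
proof -
  have r0: "1 / (m - 1) * rr m u b \<ge> 0" using rr_nonpos[OF m u b] m
    by (simp add: divide_nonpos_nonpos)
  show ?thesis
  proof (cases "u \<ge> b")
    case True
    have "1 / (e * m) * (1 / (m - 1) * rr m u b) \<ge> 0" by (rule mult_nonneg_nonneg[OF _ r0]) (use e m in simp)
    moreover have "e / 2 * b powr m \<ge> 0" using e by simp
    ultimately show ?thesis using True by (simp add: max_def)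
  next
    case False
    define t where "t = u / b"
    have ut: "u = b * t" using b by (simp add: t_def)
    have t0: "t \<ge> 0" "t \<le> 1" using u b False by (auto simp: t_def)
    have bm1: "b powr (m - 1) * b = b powr m" using b by (simp add: powr_diff)
    have um: "u powr m = b powr m * t powr m" using b t0 by (simp add: ut powr_mult)
    have eq0: "rr m u b = b powr m * t powr m - b powr m - m * (b powr (m - 1) * b) * (t - 1)"
      unfolding rr_def um by (simp add: ut algebra_simps)
    have eq1: "rr m u b = - (b powr m * (1 + m * (t - 1) - t powr m))"
      unfolding eq0 bm1 by (simp add: algebra_simps)
    have eq: "1 / (m - 1) * rr m u b = b powr m * (1 + m * (t - 1) - t powr m) / (1 - m)"
      unfolding eq1 using m by (simp add: field_simps)
    have T3: "1 + m * (t - 1) - t powr m \<ge> m * (1 - m) / 2 * (1 - t)\<^sup>2"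
      using tangent_T3[OF m t0] .
    have P: "b powr m > 0" using b by simp
    have lhs: "b powr (m - 1) * max (b - u) 0 = b powr m * (1 - t)"
      using False by (simp add: max_def ut algebra_simps flip: bm1)
    have "b powr m * (1 + m * (t - 1) - t powr m) / (1 - m) \<ge> b powr m * (m / 2 * (1 - t)\<^sup>2)"
    proof -
      have "m / 2 * (1 - t)\<^sup>2 \<le> (1 + m * (t - 1) - t powr m) / (1 - m)"
        using T3 m by (subst pos_le_divide_eq) (auto simp: mult_ac)
      then have "b powr m * (m / 2 * (1 - t)\<^sup>2) \<le> b powr m * ((1 + m * (t - 1) - t powr m) / (1 - m))"
        using P by (intro mult_left_mono) auto
      then show ?thesis by simp
    qed
    then have r1: "1 / (e * m) * (b powr m * (1 + m * (t - 1) - t powr m) / (1 - m)) \<ge> 1 / (e * m) * (b powr m * (m / 2 * (1 - t)\<^sup>2))"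
      using m e by (intro mult_left_mono) auto
    have r2: "1 / (e * m) * (b powr m * (m / 2 * (1 - t)\<^sup>2)) = b powr m * ((1 - t)\<^sup>2 / (2 * e))"
      using m e by (simp add: field_simps)
    have r: "1 / (e * m) * (1 / (m - 1) * rr m u b) \<ge> b powr m * ((1 - t)\<^sup>2 / (2 * e))"
      unfolding eq using r1 unfolding r2 .
    have amgm: "1 - t \<le> e / 2 + (1 - t)\<^sup>2 / (2 * e)"
    proof -
      have "0 \<le> (e - (1 - t))\<^sup>2" by simp
      then show ?thesis using e by (simp add: field_simps power2_eq_square)
    qed
    have "b powr m * (1 - t) \<le> b powr m * (e / 2 + (1 - t)\<^sup>2 / (2 * e))"
      using amgm P by (simp add: mult_left_mono)
    then show ?thesis unfolding lhs using r by (simp add: algebra_simps)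
  qed
qed



lemma final_arith:
  fixes s K1 m y F :: real
  assumes s: "s > 0" and K1: "K1 > 0" and m: "m > 0" and y: "y \<ge> 0"
    and H: "\<And>e. e > 0 \<Longrightarrow> s * y \<le> e / 2 * (s * K1) + 1 / (e * m) * F"
  shows "m / (8 * K1) * (2 * y)\<^sup>2 \<le> F / s"
proof (cases "y = 0")
  case True
  have "F \<ge> 0"
  proof (rule ccontr)
    assume "\<not> F \<ge> 0"
    then have F: "F < 0" by simp
    have *: "- F \<le> e\<^sup>2 * (m * s * K1 / 2)" if "e > 0" for e
    proof -
      have "0 \<le> e / 2 * (s * K1) + 1 / (e * m) * F" using H[OF that] True by simp
      then have "0 \<le> (e / 2 * (s * K1) + 1 / (e * m) * F) * (e * m)" using that m by simp
      also have "\<dots> = e\<^sup>2 * (m * s * K1 / 2) + F" using that m by (simp add: field_simps power2_eq_square)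
      finally show ?thesis by simp
    qed
    define q where "q = - F / (m * s * K1)"
    have q: "q > 0" using F s K1 m by (simp add: q_def divide_neg_pos)
    have "- F \<le> (sqrt q)\<^sup>2 * (m * s * K1 / 2)" using *[of "sqrt q"] q by simp
    also have "\<dots> = - F / 2" using q s K1 m by (simp add: q_def)
    finally show False using F by simp
  qed
  then show ?thesis using True s by simp
next
  case False
  then have y0: "y > 0" using y by simp
  define e where "e = y / K1"
  have e0: "e > 0" using y0 K1 by (simp add: e_def)
  have "s * y \<le> e / 2 * (s * K1) + 1 / (e * m) * F" using H[OF e0] .
  also have "e / 2 * (s * K1) = s * y / 2" using K1 by (simp add: e_def)
  finally have "s * y / 2 \<le> 1 / (e * m) * F" by linarith
  then have "s * y / 2 \<le> K1 * F / (y * m)" using K1 y0 by (simp add: e_def field_simps)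
  then have "s * y / 2 * (y * m) \<le> K1 * F" using y0 m by (simp add: pos_le_divide_eq)
  then have "m * (2 * y)\<^sup>2 * s \<le> 8 * K1 * F" by (simp add: power2_eq_square algebra_simps)
  then show ?thesis using s K1 m by (simp add: field_simps)
qed

theorem theorem3p1:
  fixes u :: "'a::euclidean_space \<Rightarrow> real" and m M \<sigma> :: real
  assumes m_lo: "real DIM('a) / (real DIM('a) + 2) < m" and m_hi: "m < 1"
    and u_nonneg: "\<And>x. u x \<ge> 0"
    and u_int: "integrable lborel u"
    and um_int: "integrable lborel (\<lambda>x. u x powr m)"
    and mom_int: "integrable lborel (\<lambda>x. (norm x)\<^sup>2 * u x)"
    and M_def: "M = (\<integral>x. u x \<partial>lborel)"
    and M_pos: "M > 0"
    and sigma_pos: "\<sigma> > 0"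
    and sigma_mom: "(\<integral>x. (norm x)\<^sup>2 * u x \<partial>lborel)
                    = (\<integral>x. (norm (x::'a))\<^sup>2 * barenblatt m M \<sigma> x \<partial>lborel)"
  shows "rel_entropy m M \<sigma> u / \<sigma> powr (real DIM('a) / 2 * (1 - m))
         \<ge> m / (8 * (\<integral>x. barenblatt m M 1 (x::'a) powr m \<partial>lborel))
            * (CM TYPE('a) m M * (\<integral>x. \<bar>u x - barenblatt m M \<sigma> x\<bar> \<partial>lborel)
               + 1 / \<sigma> * (\<integral>x. (norm x)\<^sup>2 * \<bar>u x - barenblatt m M \<sigma> x\<bar> \<partial>lborel))\<^sup>2"
proof -
  define D where "D = real DIM('a)"
  define e where "e = 1 / (m - 1)"
  define C where "C = CM TYPE('a) m M"
  define B where "B = (barenblatt m M \<sigma> :: 'a \<Rightarrow> real)"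
  define B1 where "B1 = (barenblatt m M 1 :: 'a \<Rightarrow> real)"
  define s where "s = \<sigma> powr (real DIM('a) / 2 * (1 - m))"
  define K1 where "K1 = (\<integral>x. B1 x powr m \<partial>lborel)"
  define F where "F = rel_entropy m M \<sigma> u"
  have D1: "D \<ge> 1" using DIM_positive[where 'a='a] unfolding D_def by linarith
  have m0: "m > 0"
  proof -
    have "0 < D / (D + 2)" using D1 by simp
    then show ?thesis using m_lo unfolding D_def by linarith
  qed
  have s0: "s > 0" using sigma_pos by (simp add: s_def)
  have Bdef: "B x = \<sigma> powr (- D / 2) * (C + (norm x)\<^sup>2 / \<sigma>) powr e" for x
    by (simp add: B_def barenblatt_def C_def e_def D_def)
  have B1def: "B1 x = (C + (norm x)\<^sup>2) powr e" for x
    by (simp add: B1_def barenblatt_def C_def e_def)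
  have C0: "C \<ge> 0" by (simp add: C_def CM_def)
  have mu_pos: "(\<integral>x. (norm x)\<^sup>2 * u x \<partial>lborel) > 0"
  proof -
    have nn: "(\<integral>x. (norm x)\<^sup>2 * u x \<partial>lborel) \<ge> 0" using u_nonneg by (simp add: integral_nonneg)
    have "(\<integral>x. (norm x)\<^sup>2 * u x \<partial>lborel) \<noteq> 0"
    proof
      assume "(\<integral>x. (norm x)\<^sup>2 * u x \<partial>lborel) = 0"
      then have "AE x in lborel. (norm x)\<^sup>2 * u x = 0"
        using integral_nonneg_eq_0_iff_AE[OF mom_int] u_nonneg by simp
      then have "AE x in lborel. u x = 0"
        using AE_lborel_singleton[of "0::'a"] by eventually_elim auto
      then have "(\<integral>x. u x \<partial>lborel) = 0" by (rule integral_eq_zero_AE)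
      then show False using M_def M_pos by simp
    qed
    then show ?thesis using nn by simp
  qed
  have ib2: "integrable lborel (\<lambda>x. (norm x)\<^sup>2 * B x)"
    using mu_pos sigma_mom not_integrable_integral_eq unfolding B_def by fastforce
  have mD: "m * (D + 2) > D"
    using m_lo D1 unfolding D_def by (simp add: divide_less_eq)
  have crit: "D + 2 + 2 * e < 0"
  proof -
    have "(D + 2) * (1 - m) < 2" using mD by (simp add: algebra_simps)
    then have "D + 2 < 2 / (1 - m)" using m_hi by (simp add: less_divide_eq)
    moreover have "2 * e = - (2 / (1 - m))" using m_hi by (simp add: e_def field_simps)
    ultimately show ?thesis by linarith
  qed
  have Cpos: "C > 0"
  proof (rule ccontr)
    assume "\<not> C > 0"
    then have C00: "C = 0" using C0 by simp
    define g where "g x = (norm x)\<^sup>2 * B x" for x :: 'a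
    have g2: "g (2 *\<^sub>R x) = 2 powr (2 + 2 * e) * g x" for x
    proof -
      have n: "(norm (2 *\<^sub>R x))\<^sup>2 = 4 * (norm x)\<^sup>2" by (simp add: power2_eq_square)
      have "(4 * ((norm x)\<^sup>2 / \<sigma>)) powr e = 4 powr e * ((norm x)\<^sup>2 / \<sigma>) powr e"
        using sigma_pos by (intro powr_mult)
      then have "B (2 *\<^sub>R x) = 4 powr e * B x"
        unfolding Bdef C00 n by (simp add: mult_ac)
      moreover have "(4::real) powr e = 2 powr (2 * e)"
        using powr_powr[of 2 2 e] by simp
      ultimately have "g (2 *\<^sub>R x) = 2 powr 2 * 2 powr (2 * e) * g x"
        unfolding g_def n by simp
      then show ?thesis by (simp add: powr_add)
    qed
    have "(\<integral>x. g x \<partial>lborel) = \<bar>2\<bar>^DIM('a) * (\<integral>x. g (2 *\<^sub>R x) \<partial>lborel)"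
      by (rule integral_scale_euc) simp
    also have "\<dots> = 2 powr D * 2 powr (2 + 2 * e) * (\<integral>x. g x \<partial>lborel)"
      unfolding g2 D_def by (simp add: powr_realpow)
    also have "\<dots> = 2 powr (D + 2 + 2 * e) * (\<integral>x. g x \<partial>lborel)"
      by (simp add: powr_add add.assoc)
    finally have eq: "(\<integral>x. g x \<partial>lborel) = 2 powr (D + 2 + 2 * e) * (\<integral>x. g x \<partial>lborel)" .
    have "2 powr (D + 2 + 2 * e) < (1::real)" using crit by (intro powr_less_one) auto
    with eq have "(\<integral>x. g x \<partial>lborel) = 0"
      by (metis less_irrefl mult_cancel_right1)
    moreover have "(\<integral>x. g x \<partial>lborel) > 0"
      using mu_pos sigma_mom unfolding g_def B_def by simp
    ultimately show False by simp
  qed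
  define Ms where "Ms = Mstar TYPE('a) m"
  define F0 where "F0 z = (1 + (norm z)\<^sup>2) powr e" for z :: 'a
  have Ms_eq: "Ms = (\<integral>z. F0 z \<partial>lborel)" by (simp add: Ms_def Mstar_def F0_def e_def)
  define ex where "ex = 2 * (1 - m) / (D * (m - m_crit TYPE('a)))"
  have Cdef: "C = (Ms / M) powr ex" by (simp add: C_def CM_def Ms_def ex_def D_def)
  have Ms_ne: "Ms \<noteq> 0" using Cpos unfolding Cdef by auto
  have Ms0: "Ms \<ge> 0" unfolding Ms_eq F0_def by (simp add: integral_nonneg)
  have Mspos: "Ms > 0" using Ms_ne Ms0 by simp
  have F0_int: "integrable lborel F0" using Ms_ne Ms_eq not_integrable_integral_eq by blast
  define l where "l = sqrt (\<sigma> * C)"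
  have l0: "l > 0" using sigma_pos Cpos by (simp add: l_def)
  define Kc where "Kc = \<sigma> powr (- D / 2) * C powr e"
  have Bid: "B x = Kc * F0 ((1 / l) *\<^sub>R x)" for x
  proof -
    have l2: "l\<^sup>2 = \<sigma> * C" using sigma_pos Cpos by (simp add: l_def)
    have "(norm ((1 / l) *\<^sub>R x))\<^sup>2 = (norm x)\<^sup>2 / l\<^sup>2"
      using l0 by (simp add: power_divide)
    then have nx: "(norm ((1 / l) *\<^sub>R x))\<^sup>2 = (norm x)\<^sup>2 / (\<sigma> * C)" unfolding l2 .
    have "C + (norm x)\<^sup>2 / \<sigma> = C * (1 + (norm ((1 / l) *\<^sub>R x))\<^sup>2)"
      unfolding nx using sigma_pos Cpos by (simp add: field_simps)
    then have "(C + (norm x)\<^sup>2 / \<sigma>) powr e = C powr e * F0 ((1 / l) *\<^sub>R x)"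
      unfolding F0_def using Cpos by (simp add: powr_mult)
    then show ?thesis unfolding Bdef Kc_def by simp
  qed
  have B_int: "integrable lborel B"
  proof -
    have "integrable lborel (\<lambda>x. F0 ((1 / l) *\<^sub>R x))"
      using integrable_scale_euc[OF F0_int, of "1 / l"] l0 by simp
    then show ?thesis unfolding Bid by (rule integrable_mult_right)
  qed
  have mcrit: "m_crit TYPE('a) = (D - 2) / D" by (simp add: m_crit_def D_def)
  have Dm: "D * m - D + 2 > 0" using mD m_hi by (simp add: algebra_simps)
  have exe: "ex * (e + D / 2) = -1"
  proof -
    have "D * (m - m_crit TYPE('a)) = D * m - D + 2" using D1 by (simp add: mcrit field_simps)
    then have ex2: "ex = 2 * (1 - m) / (D * m - D + 2)" by (simp add: ex_def)
    have "e + D / 2 = (D * m - D + 2) / (2 * (m - 1))" using m_hi by (simp add: e_def field_simps)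
    then show ?thesis unfolding ex2 using Dm m_hi by (simp add: field_simps)
  qed
  have intB: "(\<integral>x. B x \<partial>lborel) = M"
  proof -
    have "Ms = \<bar>1 / l\<bar> ^ DIM('a) * (\<integral>x. F0 ((1 / l) *\<^sub>R x) \<partial>lborel)"
      unfolding Ms_eq by (rule integral_scale_euc) (use l0 in simp)
    then have i1: "(\<integral>x. F0 ((1 / l) *\<^sub>R x) \<partial>lborel) = l ^ DIM('a) * Ms"
      using l0 by (simp add: field_simps power_one_over)
    have lD: "l ^ DIM('a) = \<sigma> powr (D / 2) * C powr (D / 2)"
    proof -
      have b: "l = (\<sigma> * C) powr (1 / 2)" using sigma_pos Cpos by (simp add: l_def powr_half_sqrt)
      have "l ^ DIM('a) = l powr D" using l0 by (simp add: D_def powr_realpow)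
      also have "\<dots> = (\<sigma> * C) powr (D / 2)" unfolding b by (simp add: powr_powr)
      also have "\<dots> = \<sigma> powr (D / 2) * C powr (D / 2)" using sigma_pos Cpos by (simp add: powr_mult)
      finally show ?thesis .
    qed
    have "Kc * l ^ DIM('a) = C powr (e + D / 2)"
    proof -
      have "Kc * l ^ DIM('a) = (\<sigma> powr (- D / 2) * \<sigma> powr (D / 2)) * (C powr e * C powr (D / 2))"
        unfolding Kc_def lD by (simp add: mult_ac)
      also have "\<sigma> powr (- D / 2) * \<sigma> powr (D / 2) = 1" using sigma_pos by (simp add: powr_add[symmetric])
      finally show ?thesis by (simp add: powr_add)
    qed
    also have "\<dots> = (Ms / M) powr (ex * (e + D / 2))" unfolding Cdef by (simp add: powr_powr)
    also have "\<dots> = M / Ms" unfolding exe using Mspos M_pos by (simp add: powr_minus_divide)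
    finally have KL: "Kc * l ^ DIM('a) = M / Ms" .
    have "(\<integral>x. B x \<partial>lborel) = Kc * (\<integral>x. F0 ((1 / l) *\<^sub>R x) \<partial>lborel)"
      unfolding Bid by simp
    also have "\<dots> = M" unfolding i1 using KL Mspos by (simp add: mult.assoc[symmetric])
    finally show ?thesis .
  qed
  define w where "w x = C + (norm x)\<^sup>2 / \<sigma>" for x :: 'a
  have w_pos: "w x > 0" for x using Cpos sigma_pos by (simp add: w_def add_pos_nonneg)
  have Bpos: "B x > 0" for x using w_pos[of x] sigma_pos unfolding Bdef w_def[symmetric] by simp
  have Bm1: "B x powr (m - 1) = s * w x" for x
  proof -
    have "B x powr (m - 1) = (\<sigma> powr (- D / 2)) powr (m - 1) * (w x powr e) powr (m - 1)"
      unfolding Bdef w_def[symmetric] using sigma_pos w_pos[of x] by (simp add: powr_mult)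
    also have "\<dots> = \<sigma> powr (- D / 2 * (m - 1)) * w x powr (e * (m - 1))" by (simp add: powr_powr)
    also have "e * (m - 1) = 1" using m_hi by (simp add: e_def)
    also have "- D / 2 * (m - 1) = real DIM('a) / 2 * (1 - m)" by (simp add: D_def field_simps)
    finally show ?thesis using w_pos[of x] by (simp add: s_def)
  qed
  have B_B1: "B x = \<sigma> powr (- D / 2) * B1 ((1 / sqrt \<sigma>) *\<^sub>R x)" for x
  proof -
    have "(norm ((1 / sqrt \<sigma>) *\<^sub>R x))\<^sup>2 = (norm x)\<^sup>2 / \<sigma>"
      using sigma_pos by (simp add: power_divide)
    then show ?thesis unfolding Bdef B1def by simp
  qed
  have Bm: "B x powr m = \<sigma> powr (- D / 2 * m) * B1 ((1 / sqrt \<sigma>) *\<^sub>R x) powr m" for x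
  proof -
    have "B1 ((1 / sqrt \<sigma>) *\<^sub>R x) \<ge> 0" by (simp add: B1def)
    then show ?thesis unfolding B_B1 using sigma_pos by (simp add: powr_mult powr_powr)
  qed
  have rel_eq: "F = 1 / (m - 1) * (\<integral>x. rr m (u x) (B x) \<partial>lborel)"
    by (simp add: F_def rel_entropy_def rr_def B_def)
  have F0': "F \<ge> 0"
  proof -
    have "(\<integral>x. - rr m (u x) (B x) \<partial>lborel) \<ge> 0"
    proof (rule Bochner_Integration.integral_nonneg)
      fix x show "0 \<le> - rr m (u x) (B x)" using rr_nonpos[OF m0 m_hi u_nonneg[of x] Bpos[of x]] by simp
    qed
    then have "(\<integral>x. rr m (u x) (B x) \<partial>lborel) \<le> 0" by simp
    then show ?thesis unfolding rel_eq using m_hi by (simp add: divide_nonpos_nonpos mult_nonpos_nonpos)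
  qed
  define Y where "Y = C * (\<integral>x. \<bar>u x - B x\<bar> \<partial>lborel) + 1 / \<sigma> * (\<integral>x. (norm x)\<^sup>2 * \<bar>u x - B x\<bar> \<partial>lborel)"
  have goal_eq: "?thesis \<longleftrightarrow> m / (8 * K1) * Y\<^sup>2 \<le> F / s"
    by (simp add: Y_def F_def s_def K1_def B1_def B_def C_def)
  show ?thesis
  proof (cases "K1 > 0")
    case False
    have "K1 \<ge> 0" unfolding K1_def by (rule Bochner_Integration.integral_nonneg) simp
    then have "K1 = 0" using False by linarith
    then show ?thesis unfolding goal_eq using F0' s0 by simp
  next
    case True
    have B1m_int: "integrable lborel (\<lambda>x. B1 x powr m)"
      using True not_integrable_integral_eq unfolding K1_def by fastforce
    have Bm_int: "integrable lborel (\<lambda>x. B x powr m)"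
    proof -
      have "integrable lborel (\<lambda>x. B1 ((1 / sqrt \<sigma>) *\<^sub>R x) powr m)"
        using integrable_scale_euc[OF B1m_int, of "1 / sqrt \<sigma>"] sigma_pos by simp
      then show ?thesis unfolding Bm by (rule integrable_mult_right)
    qed
    have intBm: "(\<integral>x. B x powr m \<partial>lborel) = s * K1"
    proof -
      have "K1 = \<bar>1 / sqrt \<sigma>\<bar> ^ DIM('a) * (\<integral>x. B1 ((1 / sqrt \<sigma>) *\<^sub>R x) powr m \<partial>lborel)"
        unfolding K1_def by (rule integral_scale_euc) (use sigma_pos in simp)
      then have i1: "(\<integral>x. B1 ((1 / sqrt \<sigma>) *\<^sub>R x) powr m \<partial>lborel) = sqrt \<sigma> ^ DIM('a) * K1"
        using sigma_pos by (simp add: field_simps power_one_over)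
      have sq: "sqrt \<sigma> ^ DIM('a) = \<sigma> powr (D / 2)"
      proof -
        have "sqrt \<sigma> ^ DIM('a) = (\<sigma> powr (1/2)) powr D"
          using sigma_pos by (simp add: D_def powr_realpow powr_half_sqrt)
        then show ?thesis by (simp add: powr_powr)
      qed
      have "(\<integral>x. B x powr m \<partial>lborel) = \<sigma> powr (- D / 2 * m) * (\<integral>x. B1 ((1 / sqrt \<sigma>) *\<^sub>R x) powr m \<partial>lborel)"
        unfolding Bm by simp
      also have "\<dots> = (\<sigma> powr (- D / 2 * m) * \<sigma> powr (D / 2)) * K1" unfolding i1 sq by simp
      also have "\<sigma> powr (- D / 2 * m) * \<sigma> powr (D / 2) = s"
        unfolding s_def D_def by (simp add: powr_add[symmetric] field_simps)
      finally show ?thesis .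
    qed
    have mom_B: "(\<integral>x. (norm x)\<^sup>2 * B x \<partial>lborel) = (\<integral>x. (norm x)\<^sup>2 * u x \<partial>lborel)"
      using sigma_mom unfolding B_def by simp
    have wu_eq: "w x * u x = C * u x + 1 / \<sigma> * ((norm x)\<^sup>2 * u x)" for x
      by (simp add: w_def algebra_simps)
    have wB_eq: "w x * B x = C * B x + 1 / \<sigma> * ((norm x)\<^sup>2 * B x)" for x
      by (simp add: w_def algebra_simps)
    have wu_int: "integrable lborel (\<lambda>x. w x * u x)"
      unfolding wu_eq using u_int mom_int by simp
    have wB_int: "integrable lborel (\<lambda>x. w x * B x)"
      unfolding wB_eq using B_int ib2 by simp
    have int_wu: "(\<integral>x. w x * u x \<partial>lborel) = C * M + 1 / \<sigma> * (\<integral>x. (norm x)\<^sup>2 * u x \<partial>lborel)"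
      unfolding wu_eq using u_int mom_int M_def by simp
    have int_wB: "(\<integral>x. w x * B x \<partial>lborel) = C * M + 1 / \<sigma> * (\<integral>x. (norm x)\<^sup>2 * u x \<partial>lborel)"
      unfolding wB_eq using B_int ib2 intB mom_B by simp
    have abs_int: "integrable lborel (\<lambda>x. \<bar>u x - B x\<bar>)"
      using u_int B_int by simp
    have mabs_eq: "(norm x)\<^sup>2 * \<bar>u x - B x\<bar> = \<bar>(norm x)\<^sup>2 * u x - (norm x)\<^sup>2 * B x\<bar>" for x
      by (simp add: abs_mult right_diff_distrib[symmetric])
    have mabs_int: "integrable lborel (\<lambda>x. (norm x)\<^sup>2 * \<bar>u x - B x\<bar>)"
      unfolding mabs_eq using mom_int ib2 by simp
    have wabs_eq: "w x * \<bar>u x - B x\<bar> = C * \<bar>u x - B x\<bar> + 1 / \<sigma> * ((norm x)\<^sup>2 * \<bar>u x - B x\<bar>)" for x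
      by (simp add: w_def algebra_simps)
    have wabs_int: "integrable lborel (\<lambda>x. w x * \<bar>u x - B x\<bar>)"
      unfolding wabs_eq using abs_int mabs_int by simp
    have Y_eq: "Y = (\<integral>x. w x * \<bar>u x - B x\<bar> \<partial>lborel)"
      unfolding wabs_eq Y_def using abs_int mabs_int by simp
    define Ym where "Ym = (\<integral>x. w x * max (B x - u x) 0 \<partial>lborel)"
    have max_eq: "w x * max (B x - u x) 0 = (w x * \<bar>u x - B x\<bar> - (w x * u x - w x * B x)) / 2" for x
      by (simp add: max_def abs_if algebra_simps)
    have Ym_int: "integrable lborel (\<lambda>x. w x * max (B x - u x) 0)"
      unfolding max_eq using wabs_int wu_int wB_int by simp
    have Y2: "Y = 2 * Ym"
    proof -
      have "Ym = ((\<integral>x. w x * \<bar>u x - B x\<bar> \<partial>lborel) - ((\<integral>x. w x * u x \<partial>lborel) - (\<integral>x. w x * B x \<partial>lborel))) / 2"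
        unfolding Ym_def max_eq using wabs_int wu_int wB_int by simp
      then show ?thesis unfolding Y_eq int_wu int_wB by simp
    qed
    have Ym0: "Ym \<ge> 0" unfolding Ym_def
      by (rule Bochner_Integration.integral_nonneg) (use w_pos in \<open>simp add: less_imp_le\<close>)
    have rr_eq: "rr m (u x) (B x) = u x powr m - B x powr m - m * (s * (w x * u x - w x * B x))" for x
      unfolding rr_def Bm1 by (simp add: algebra_simps)
    have rr_int: "integrable lborel (\<lambda>x. rr m (u x) (B x))"
      unfolding rr_eq using um_int Bm_int wu_int wB_int by simp
    have H: "s * Ym \<le> ep / 2 * (s * K1) + 1 / (ep * m) * F" if ep: "ep > 0" for ep
    proof -
      have "s * Ym = (\<integral>x. B x powr (m - 1) * max (B x - u x) 0 \<partial>lborel)"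
        unfolding Ym_def Bm1 by (simp add: mult.assoc)
      also have "\<dots> \<le> (\<integral>x. ep / 2 * B x powr m + 1 / (ep * m) * (1 / (m - 1) * rr m (u x) (B x)) \<partial>lborel)"
      proof (rule integral_mono)
        show "integrable lborel (\<lambda>x. B x powr (m - 1) * max (B x - u x) 0)"
          unfolding Bm1 using Ym_int by (simp add: mult.assoc)
        show "integrable lborel (\<lambda>x. ep / 2 * B x powr m + 1 / (ep * m) * (1 / (m - 1) * rr m (u x) (B x)))"
          using Bm_int rr_int by simp
        fix x show "B x powr (m - 1) * max (B x - u x) 0 \<le> ep / 2 * B x powr m + 1 / (ep * m) * (1 / (m - 1) * rr m (u x) (B x))"
          by (rule key_pt[OF m0 m_hi u_nonneg Bpos ep])
      qed
      also have "\<dots> = ep / 2 * (s * K1) + 1 / (ep * m) * F"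
        using Bm_int rr_int unfolding rel_eq intBm[symmetric] by simp
      finally show ?thesis .
    qed
    have "m / (8 * K1) * (2 * Ym)\<^sup>2 \<le> F / s"
      by (rule final_arith[OF s0 True m0 Ym0 H])
    then show ?thesis unfolding goal_eq Y2 .
  qed
qed


end
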